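(* Let $p$ be a prime and $n, k$ positive integers, $d = \gcd(n,k)$. Let $L(X) = \sum_{i=0}^t \alpha_i X^{p^i}$, $\alpha_i \in \mathbb{F}_p$, be a $p$-linearized polynomial without multiple roots, and let $L'$ be a $p$-linearized polynomial over $\mathbb{F}_p$ with $X - X^{p^k} = L \circ L'(X)$. Let $l'$ be the conventional $p$-associate of $L'$, let $w = (l', t_d^k)$, $u = l'/w$, and let $U$ be the linearized $p$-associate of $u$. Then $$\ker(L) \cap \mathbb{F}_{p^n} = U(\mathbb{F}_{p^d}).$$
   Context: For positive integers $d \mid k$, $t_d^k(X) = \sum_{i=0}^{k/d-1} X^{di} \in \mathbb{F}_p[X]$. For $l(X) = \sum \alpha_i X^i \in \mathbb{F}_p[X]$, its linearized $p$-associate is $\sum \alpha_i X^{p^i}$, and conversely $l$ is the conventional $p$-associate of that linearized polynomial. $(f,g)$ denotes the monic gcd in $\mathbb{F}_p[X]$. $\ker(L)$ is the set of roots of $L$ in an algebraic closure of $\mathbb{F}_p$; $U(\mathbb{F}_{p^d}) = \{U(x): x \in \mathbb{F}_{p^d}\}$. *)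

theory Defs
  imports "HOL-Computational_Algebra.Computational_Algebra" "Berlekamp_Zassenhaus.Finite_Field"
begin

text \<open>The prime field F_p is the type 'p mod_ring with CARD('p) = p prime.
  Polynomials over F_p are of type 'p mod_ring poly.\<close>

definition tpoly :: "nat \<Rightarrow> nat \<Rightarrow> 'p::prime_card mod_ring poly" where
  "tpoly d k = (\<Sum>i<k div d. Polynomial.monom 1 (d * i))"

definition linearized :: "'p::prime_card mod_ring poly \<Rightarrow> 'p mod_ring poly" where
  "linearized l = (\<Sum>i\<le>degree l. Polynomial.monom (Polynomial.coeff l i) (CARD('p) ^ i))"

definition emb :: "'p::prime_card mod_ring \<Rightarrow> 'a::field" where
  "emb c = of_int (to_int_mod_ring c)"

definition embp :: "'p::prime_card mod_ring poly \<Rightarrow> 'a::field poly" where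
  "embp f = map_poly emb f"

text \<open>ker(L): the roots of L in the algebraically closed field 'a\<close>
definition ker :: "'p::prime_card mod_ring poly \<Rightarrow> 'a::field set" where
  "ker L = {x. poly (embp L) x = 0}"

text \<open>F_{p^m} as the subfield {x. x^(p^m) = x} of 'a\<close>
definition subfield :: "nat \<Rightarrow> nat \<Rightarrow> 'a::field set" where
  "subfield p m = {x. x ^ (p ^ m) = x}"

end

theory Submission
  imports Defs
begin

lemma emb_0[simp]: "emb 0 = 0"
  unfolding emb_def by (simp add: zero_mod_ring.rep_eq to_int_mod_ring.rep_eq)

lemma emb_field_hom:
  assumes ch: "CHAR('a::field) = CARD('p::prime_card)"
  shows "field_hom (emb :: 'p mod_ring \<Rightarrow> 'a)"
proof
  fix x y :: "'p mod_ring"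
  have c: "int CARD('p) = int CHAR('a)" using ch by simp
  show "(emb (x + y) :: 'a) = emb x + emb y"
    unfolding emb_def to_int_mod_ring_add c by simp
  show "(emb (x * y) :: 'a) = emb x * emb y"
    unfolding emb_def to_int_mod_ring_mult c by simp
  show "(emb 1 :: 'a) = 1"
    unfolding emb_def by (simp add: one_mod_ring.rep_eq to_int_mod_ring.rep_eq)
  show "(emb 0 :: 'a) = 0" by simp
qed

lemma card_pos: "CARD('p::prime_card) > 0"
  using prime_card[where 'a='p] prime_gt_0_nat by blast

definition Lv :: "'p::prime_card mod_ring poly \<Rightarrow> 'a::field \<Rightarrow> 'a" where
  "Lv f x = (\<Sum>i\<le>degree f. emb (Polynomial.coeff f i) * x ^ (CARD('p) ^ i))"

lemma Lv_upto:
  fixes f :: "'p::prime_card mod_ring poly"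
  assumes "degree f < N"
  shows "Lv f x = (\<Sum>i<N. emb (Polynomial.coeff f i) * x ^ (CARD('p::prime_card) ^ i))"
  unfolding Lv_def
  by (rule sum.mono_neutral_left) (use assms in \<open>auto simp: coeff_eq_0\<close>)

lemma Lv_add:
  fixes f g :: "'p::prime_card mod_ring poly" and x :: "'a::field"
  assumes ch: "CHAR('a) = CARD('p)"
  shows "Lv (f + g) x = Lv f x + Lv g x"
proof -
  interpret field_hom "emb :: 'p mod_ring \<Rightarrow> 'a" by (rule emb_field_hom[OF ch])
  define N where "N = Suc (degree f + degree g)"
  have "degree (f+g) < N" unfolding N_def using degree_add_le_max[of f g] by linarith
  moreover have "degree f < N" "degree g < N" unfolding N_def by auto
  ultimately show ?thesis
    by (subst (1 2 3) Lv_upto[where N=N]) (simp_all add: sum.distrib distrib_right hom_add)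
qed

lemma Lv_smult:
  fixes f :: "'p::prime_card mod_ring poly" and x :: "'a::field"
  assumes ch: "CHAR('a) = CARD('p)"
  shows "Lv (Polynomial.smult c f) x = emb c * Lv f x"
proof -
  interpret field_hom "emb :: 'p mod_ring \<Rightarrow> 'a" by (rule emb_field_hom[OF ch])
  define N where "N = Suc (degree f)"
  have "degree (Polynomial.smult c f) < N" unfolding N_def using degree_smult_le[of c f] by linarith
  moreover have "degree f < N" unfolding N_def by auto
  ultimately show ?thesis
    by (subst (1 2) Lv_upto[where N=N]) (simp_all add: sum_distrib_left hom_mult mult.assoc)
qed

lemma Lv_minus:
  fixes f :: "'p::prime_card mod_ring poly" and x :: "'a::field"
  assumes ch: "CHAR('a) = CARD('p)"
  shows "Lv (-f) x = - Lv f x"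
proof -
  interpret field_hom "emb :: 'p mod_ring \<Rightarrow> 'a" by (rule emb_field_hom[OF ch])
  show ?thesis using Lv_smult[OF ch, of "-1" f x] by (simp add: hom_uminus)
qed

lemma Lv_diff:
  fixes f g :: "'p::prime_card mod_ring poly" and x :: "'a::field"
  assumes ch: "CHAR('a) = CARD('p)"
  shows "Lv (f - g) x = Lv f x - Lv g x"
  using Lv_add[OF ch, of f "-g" x] Lv_minus[OF ch, of g x] by simp

lemma Lv_0[simp]: "Lv 0 x = 0"
  by (simp add: Lv_def)

lemma Lv_pCons:
  fixes h :: "'p::prime_card mod_ring poly" and x :: "'a::field"
  shows "Lv (pCons c h) x = emb c * x + Lv h (x ^ CARD('p))"
proof -
  define N where "N = Suc (degree h)"
  have "degree (pCons c h) < Suc N" unfolding N_def using degree_pCons_le[of c h] by linarith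
  then have "Lv (pCons c h) x = (\<Sum>i<Suc N. emb (Polynomial.coeff (pCons c h) i) * x ^ (CARD('p) ^ i))"
    by (rule Lv_upto)
  also have "\<dots> = emb c * x + (\<Sum>i<N. emb (Polynomial.coeff h i) * x ^ (CARD('p) ^ Suc i))"
    by (subst sum.lessThan_Suc_shift) simp
  also have "(\<Sum>i<N. emb (Polynomial.coeff h i) * x ^ (CARD('p) ^ Suc i)) = Lv h (x ^ CARD('p))"
    by (subst Lv_upto[where N=N]) (auto simp: N_def power_mult)
  finally show ?thesis .
qed

lemma emb_pow_card:
  fixes c :: "'p::prime_card mod_ring"
  assumes ch: "CHAR('a::field) = CARD('p)"
  shows "(emb c :: 'a) ^ CARD('p) = emb c"
proof -
  interpret field_hom "emb :: 'p mod_ring \<Rightarrow> 'a" by (rule emb_field_hom[OF ch])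
  have "c ^ CARD('p) = c"
    using finite_field_power_card_eq_same[of c] by simp
  then show ?thesis by (metis hom_power)
qed

lemma Lv_frob:
  fixes h :: "'p::prime_card mod_ring poly" and x :: "'a::field"
  assumes ch: "CHAR('a) = CARD('p)"
  shows "Lv h (x ^ CARD('p)) = Lv h x ^ CARD('p)"
proof -
  have pr: "prime CHAR('a)" using ch prime_card by simp
  show ?thesis unfolding Lv_def
    by (subst freshmans_dream_sum[OF pr ch[symmetric]])
       (simp add: power_mult_distrib emb_pow_card[OF ch] flip: power_mult, simp add: mult.commute)
qed

lemma Lv_addx:
  fixes h :: "'p::prime_card mod_ring poly" and x y :: "'a::field"
  assumes ch: "CHAR('a) = CARD('p)"
  shows "Lv h (x + y) = Lv h x + Lv h y"
proof -
  have pr: "prime CHAR('a)" using ch prime_card by simp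
  show ?thesis unfolding Lv_def
    by (simp add: freshmans_dream'[OF pr] ch distrib_left sum.distrib)
qed

lemma Lv_zerox[simp]:
  fixes h :: "'p::prime_card mod_ring poly"
  shows "Lv h (0::'a::field) = 0"
  unfolding Lv_def using card_pos[where 'p='p] by (simp add: power_0_left)

lemma Lv_mult:
  fixes f g :: "'p::prime_card mod_ring poly" and x :: "'a::field"
  assumes ch: "CHAR('a) = CARD('p)"
  shows "Lv (f * g) x = Lv f (Lv g x)"
proof (induction f)
  case (pCons c f0)
  have "Lv (pCons c f0 * g) x = Lv (Polynomial.smult c g + pCons 0 (f0 * g)) x" by simp
  also have "\<dots> = emb c * Lv g x + Lv (f0 * g) (x ^ CARD('p))"
    by (simp add: Lv_add[OF ch] Lv_smult[OF ch] Lv_pCons)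
  also have "\<dots> = emb c * Lv g x + Lv f0 (Lv g x) ^ CARD('p)"
    by (simp add: Lv_frob[OF ch] pCons.IH)
  also have "\<dots> = Lv (pCons c f0) (Lv g x)"
    by (simp add: Lv_pCons Lv_frob[OF ch])
  finally show ?case .
qed simp

lemma Lv_monom:
  fixes x :: "'a::field"
  assumes ch: "CHAR('a) = CARD('p::prime_card)"
  shows "Lv (Polynomial.monom 1 m :: 'p mod_ring poly) x = x ^ (CARD('p) ^ m)"
proof -
  interpret field_hom "emb :: 'p mod_ring \<Rightarrow> 'a" by (rule emb_field_hom[OF ch])
  have "\<And>i. emb (Polynomial.coeff (Polynomial.monom 1 m :: 'p mod_ring poly) i) * x ^ (CARD('p) ^ i)
     = (if i = m then x ^ (CARD('p) ^ m) else 0)"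
    by (simp add: coeff_monom)
  then show ?thesis unfolding Lv_def by (simp add: degree_monom_eq)
qed

lemma Lv_one:
  fixes x :: "'a::field"
  assumes ch: "CHAR('a) = CARD('p::prime_card)"
  shows "Lv (1 :: 'p mod_ring poly) x = x"
  using Lv_monom[OF ch, of 0 x] by (simp add: one_pCons monom_0)

lemma poly_embp_lin:
  fixes f :: "'p::prime_card mod_ring poly" and x :: "'a::field"
  assumes ch: "CHAR('a) = CARD('p)"
  shows "poly (embp (linearized f)) x = Lv f x"
proof -
  interpret field_hom "emb :: 'p mod_ring \<Rightarrow> 'a" by (rule emb_field_hom[OF ch])
  interpret mp: map_poly_comm_ring_hom "emb :: 'p mod_ring \<Rightarrow> 'a" ..
  show ?thesis
    unfolding embp_def linearized_def Lv_def
    by (simp add: mp.hom_sum map_poly_monom poly_sum poly_monom)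
qed

lemma coeff_lin:
  fixes f :: "'p::prime_card mod_ring poly"
  shows "Polynomial.coeff (linearized f) (CARD('p) ^ i) = Polynomial.coeff f i"
proof -
  have p1: "CARD('p) > 1" using prime_card[where 'a='p] prime_gt_1_nat by blast
  have "Polynomial.coeff (linearized f) (CARD('p) ^ i) =
     (\<Sum>j\<le>degree f. if j = i then Polynomial.coeff f j else 0)"
    unfolding linearized_def coeff_sum
    by (intro sum.cong refl) (use p1 in \<open>auto simp: coeff_monom\<close>)
  also have "\<dots> = Polynomial.coeff f i"
    by (auto simp: coeff_eq_0)
  finally show ?thesis .
qed

lemma alg_closed_infinite: "infinite (UNIV :: 'a::alg_closed_field set)"
proof
  assume fin: "finite (UNIV :: 'a set)"
  define q :: "'a poly" where "q = (\<Prod>a\<in>UNIV. [:-a, 1:]) + 1"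
  have "degree (\<Prod>a\<in>(UNIV::'a set). [:-a, 1:]) = card (UNIV :: 'a set)"
    by (subst degree_prod_eq_sum_degree) auto
  moreover have "card (UNIV :: 'a set) > 0" using fin by (simp add: card_gt_0_iff)
  ultimately have "degree q > 0" unfolding q_def
    by (subst degree_add_eq_left) auto
  then obtain x where "poly q x = 0" using alg_closed_imp_poly_has_root by blast
  moreover have "poly (\<Prod>a\<in>(UNIV::'a set). [:-a, 1:]) x = 0"
    unfolding poly_prod using fin by (intro prod_zero) auto
  ultimately show False unfolding q_def by simp
qed

lemma Lv_inj:
  fixes f :: "'p::prime_card mod_ring poly"
  assumes ch: "CHAR('a::alg_closed_field) = CARD('p)"
    and z: "\<And>x::'a. Lv f x = 0"
  shows "f = 0"
proof -
  interpret field_hom "emb :: 'p mod_ring \<Rightarrow> 'a" by (rule emb_field_hom[OF ch])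
  have "(embp (linearized f) :: 'a poly) = 0"
  proof (rule ccontr)
    assume "(embp (linearized f) :: 'a poly) \<noteq> 0"
    then have "finite {x::'a. poly (embp (linearized f)) x = 0}" by (rule poly_roots_finite)
    then have "finite (UNIV :: 'a set)" using z by (simp add: poly_embp_lin[OF ch])
    then show False using alg_closed_infinite by blast
  qed
  then have "\<And>j. emb (Polynomial.coeff (linearized f) j) = (0::'a)"
    unfolding embp_def by (metis coeff_0 coeff_map_poly hom_zero)
  then have "\<And>i. Polynomial.coeff f i = 0" using coeff_lin by (metis hom_0_iff)
  then show ?thesis by (simp add: poly_eq_iff)
qed

lemma Lv_surj:
  fixes u :: "'p::prime_card mod_ring poly"
  assumes ch: "CHAR('a::alg_closed_field) = CARD('p)" and u: "u \<noteq> 0"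
  shows "\<exists>x::'a. Lv u x = y"
proof -
  interpret field_hom "emb :: 'p mod_ring \<Rightarrow> 'a" by (rule emb_field_hom[OF ch])
  define Q :: "'a poly" where "Q = embp (linearized u)"
  have "Polynomial.coeff Q (CARD('p) ^ degree u) = emb (lead_coeff u)"
    unfolding Q_def embp_def by (simp add: coeff_lin)
  also have "\<dots> \<noteq> 0" using u by simp
  finally have "CARD('p) ^ degree u \<le> degree Q" by (rule le_degree)
  moreover have "CARD('p) ^ degree u > 0" using card_pos[where 'p='p] by simp
  ultimately have dQ: "degree Q > 0" by linarith
  have "degree (Q - [:y:]) = degree Q"
  proof -
    have "Q - [:y:] = Q + [:-y:]" by simp
    also have "degree \<dots> = degree Q" using dQ by (intro degree_add_eq_left) simp
    finally show ?thesis .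
  qed
  with dQ have "degree (Q - [:y:]) > 0" by simp
  then obtain x where "poly (Q - [:y:]) x = 0" using alg_closed_imp_poly_has_root by blast
  then show ?thesis unfolding Q_def by (auto simp: poly_embp_lin[OF ch])
qed

lemma hyp_sem:
  fixes A B :: "'p::prime_card mod_ring poly" and x :: "'a::field"
  assumes ch: "CHAR('a) = CARD('p)"
  shows "poly (embp (pcompose A B)) x = poly (embp A) (poly (embp B) x)"
    and "poly (embp ([:0, 1:] - Polynomial.monom 1 m :: 'p mod_ring poly)) x = x - x ^ m"
proof -
  interpret field_hom "emb :: 'p mod_ring \<Rightarrow> 'a" by (rule emb_field_hom[OF ch])
  show "poly (embp (pcompose A B)) x = poly (embp A) (poly (embp B) x)"
    unfolding embp_def by (simp add: map_poly_pcompose poly_pcompose)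
  interpret mp: map_poly_comm_ring_hom "emb :: 'p mod_ring \<Rightarrow> 'a" ..
  show "poly (embp ([:0, 1:] - Polynomial.monom 1 m :: 'p mod_ring poly)) x = x - x ^ m"
    unfolding embp_def by (simp add: mp.hom_minus map_poly_monom poly_monom)
qed

lemma fix_add:
  fixes x :: "'a::comm_ring_1"
  assumes "x ^ (q ^ a) = x" "x ^ (q ^ b) = x"
  shows "x ^ (q ^ (a + b)) = x"
  by (metis assms power_add power_mult)

lemma fix_mult:
  fixes x :: "'a::comm_ring_1"
  assumes "x ^ (q ^ a) = x"
  shows "x ^ (q ^ (a * j)) = x"
proof (induction j)
  case (Suc j)
  then show ?case using fix_add[OF assms Suc] by (simp add: add.commute)
qed simp

lemma fix_sub:
  fixes x :: "'a::field"
  assumes ch: "CHAR('a) = CARD('p::prime_card)"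
    and ba: "b \<le> a" and xa: "x ^ (CARD('p) ^ a) = x" and xb: "x ^ (CARD('p) ^ b) = x"
  shows "x ^ (CARD('p) ^ (a - b)) = x"
proof -
  define y where "y = x ^ (CARD('p) ^ (a - b))"
  have "y ^ (CARD('p) ^ b) = x ^ (CARD('p) ^ a)"
    unfolding y_def using ba by (metis le_add_diff_inverse2 power_add power_mult)
  also have "\<dots> = x ^ (CARD('p) ^ b)" using xa xb by simp
  finally have e: "y ^ (CARD('p) ^ b) = x ^ (CARD('p) ^ b)" .
  have "Lv (Polynomial.monom 1 b :: 'p mod_ring poly) (y - x) + Lv (Polynomial.monom 1 b :: 'p mod_ring poly) x
      = Lv (Polynomial.monom 1 b :: 'p mod_ring poly) y"
    by (metis Lv_addx[OF ch] diff_add_cancel)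
  then have "(y - x) ^ (CARD('p) ^ b) = 0" using e by (simp add: Lv_monom[OF ch])
  then have "y = x" by simp
  then show ?thesis unfolding y_def .
qed

lemma fix_gcd:
  fixes x :: "'a::field"
  assumes ch: "CHAR('a) = CARD('p::prime_card)"
    and n: "n > 0" and xn: "x ^ (CARD('p) ^ n) = x" and xk: "x ^ (CARD('p) ^ k) = x"
  shows "x ^ (CARD('p) ^ gcd n k) = x"
proof -
  obtain a b where ab: "n * a = k * b + gcd n k" using bezout_nat[of n k] n by auto
  have 1: "x ^ (CARD('p) ^ (n * a)) = x" by (rule fix_mult[OF xn])
  have 2: "x ^ (CARD('p) ^ (k * b)) = x" by (rule fix_mult[OF xk])
  have "x ^ (CARD('p) ^ (n * a - k * b)) = x" by (rule fix_sub[OF ch _ 1 2]) (use ab in simp)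
  moreover have "n * a - k * b = gcd n k" using ab by simp
  ultimately show ?thesis by simp
qed

lemma telescope:
  "(Polynomial.monom 1 d - 1) * (\<Sum>i<m. Polynomial.monom 1 (d * i)) = (Polynomial.monom 1 (d * m) - 1 :: 'b::comm_ring_1 poly)"
proof (induction m)
  case (Suc m)
  have "(Polynomial.monom 1 d - 1) * (\<Sum>i<Suc m. Polynomial.monom 1 (d * i))
     = (Polynomial.monom 1 (d * m) - 1) + (Polynomial.monom 1 d - 1) * Polynomial.monom (1::'b) (d * m)"
    by (simp add: Suc.IH distrib_left)
  also have "\<dots> = Polynomial.monom 1 (d * Suc m) - 1"
    by (simp add: left_diff_distrib mult_monom algebra_simps)
  finally show ?case .
qed simp

theorem lemma2:
  fixes l l' :: "'p::prime_card mod_ring poly"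
    and n k :: nat
  assumes "CHAR('a::alg_closed_field) = CARD('p)"
    and "n > 0" and "k > 0"
    and "rsquarefree (embp (linearized l) :: 'a poly)"
    and "pcompose (linearized l) (linearized l') = [:0, 1:] - Polynomial.monom 1 (CARD('p) ^ k)"
  shows "let d = gcd n k; w = gcd l' (tpoly d k); u = l' div w; U = linearized u
         in (ker (linearized l) \<inter> subfield CARD('p) n :: 'a set)
            = (\<lambda>x. poly (embp U) x) ` subfield CARD('p) d"
proof -
  note ch = assms(1)
  define d where "d = gcd n k"
  define t :: "'p mod_ring poly" where "t = tpoly d k"
  define w where "w = gcd l' t"
  define u where "u = l' div w"
  define A :: "'p mod_ring poly" where "A = Polynomial.monom 1 d - 1"
  have d0: "d > 0" using assms(2) unfolding d_def by simp
  have dk: "d dvd k" and dn: "d dvd n" unfolding d_def by auto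
  have At: "A * t = Polynomial.monom 1 k - 1"
    unfolding A_def t_def tpoly_def telescope using dk by simp
  have LA: "Lv A x = x ^ (CARD('p) ^ d) - x" for x :: 'a
    unfolding A_def by (simp add: Lv_diff[OF ch] Lv_monom[OF ch] Lv_one[OF ch])
  have sem: "Lv l (Lv l' x) = x - x ^ (CARD('p) ^ k)" for x :: 'a
    using arg_cong[OF assms(5), of "\<lambda>P. poly (embp P) x"]
    by (simp add: hyp_sem[OF ch] poly_embp_lin[OF ch])
  have ll': "l * l' = - (A * t)"
  proof -
    have "Lv (l * l' + A * t) x = 0" for x :: 'a
      by (simp add: Lv_add[OF ch] Lv_mult[OF ch] sem At Lv_diff[OF ch] Lv_monom[OF ch] Lv_one[OF ch])
    then have "l * l' + A * t = 0" by (rule Lv_inj[OF ch])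
    then show ?thesis by (simp add: eq_neg_iff_add_eq_0)
  qed
  have At0: "A * t \<noteq> 0"
  proof
    assume "A * t = 0"
    then have "Polynomial.coeff (Polynomial.monom 1 k - 1 :: 'p mod_ring poly) 0 = 0" using At by simp
    then show False using assms(3) by (simp add: coeff_monom)
  qed
  then have l'0: "l' \<noteq> 0" and t0: "t \<noteq> 0" using ll' by auto
  have w0: "w \<noteq> 0" unfolding w_def using l'0 by simp
  define t' where "t' = t div w"
  have l'_eq: "l' = u * w" unfolding u_def w_def by simp
  have t_eq: "t = t' * w" unfolding t'_def w_def by simp
  have cop: "coprime u t'" unfolding u_def t'_def w_def using l'0 by (intro div_gcd_coprime) simp
  have lu: "l * u = - (A * t')"
  proof -
    have "(l * u) * w = (- (A * t')) * w" using ll' l'_eq t_eq by (simp add: ac_simps)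
    then show ?thesis using w0 mult_right_cancel by blast
  qed
  have "u dvd A * t'" using lu by (metis dvd_minus_iff dvd_triv_right)
  then have "u dvd A" using cop by (simp add: coprime_dvd_mult_left_iff)
  then obtain v where Auv: "A = u * v" by blast
  have u0: "u \<noteq> 0" using l'0 l'_eq by auto
  have lv: "l = - (v * t')"
  proof -
    have "u * l = u * (- (v * t'))" using lu Auv by (simp add: ac_simps)
    then show ?thesis using u0 mult_left_cancel by blast
  qed
  have "gcd u t' = 1" using cop by simp
  then obtain a b where ab: "a * u + b * t' = 1"
    using bezout_coefficients_fst_snd[of u t'] by metis
  have vab: "v = a * A - b * l"
  proof -
    have "v = v * (a * u + b * t')" using ab by simp
    also have "\<dots> = a * A - b * l" using Auv lv by (simp add: algebra_simps)
    finally show ?thesis .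
  qed
  have kerl: "ker (linearized l) = {x::'a. Lv l x = 0}"
    unfolding ker_def by (simp add: poly_embp_lin[OF ch])
  have sub: "subfield CARD('p) m = {x::'a. x ^ (CARD('p) ^ m) = x}" for m
    unfolding subfield_def ..
  have img: "(\<lambda>x. poly (embp (linearized u)) x) ` S = (\<lambda>x. Lv u x) ` S" for S :: "'a set"
    by (simp add: poly_embp_lin[OF ch])
  have main: "{x::'a. Lv l x = 0} \<inter> {x. x ^ (CARD('p) ^ n) = x} = Lv u ` {x. x ^ (CARD('p) ^ d) = x}"
  proof (intro equalityI subsetI)
    fix y :: 'a
    assume y: "y \<in> {x. Lv l x = 0} \<inter> {x. x ^ (CARD('p) ^ n) = x}"
    then have ly: "Lv l y = 0" and yn: "y ^ (CARD('p) ^ n) = y" by auto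
    have "Lv l (Lv l' y) = Lv l' (Lv l y)" by (metis Lv_mult[OF ch] mult.commute)
    then have "Lv l (Lv l' y) = 0" using ly by simp
    then have yk: "y ^ (CARD('p) ^ k) = y" using sem by simp
    have yd: "y ^ (CARD('p) ^ d) = y" unfolding d_def by (rule fix_gcd[OF ch assms(2) yn yk])
    have LAy: "Lv A y = 0" using LA yd by simp
    have vy: "Lv v y = 0" unfolding vab
      by (simp add: Lv_diff[OF ch] Lv_mult[OF ch] LAy ly)
    obtain x where x: "Lv u x = y" using Lv_surj[OF ch u0] by blast
    have "Lv A x = Lv v (Lv u x)" unfolding Auv by (metis Lv_mult[OF ch] mult.commute)
    then have "Lv A x = 0" using x vy by simp
    then have "x ^ (CARD('p) ^ d) = x" using LA by simp
    then show "y \<in> Lv u ` {x. x ^ (CARD('p) ^ d) = x}" using x by blast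
  next
    fix y :: 'a
    assume "y \<in> Lv u ` {x. x ^ (CARD('p) ^ d) = x}"
    then obtain x where xd: "x ^ (CARD('p) ^ d) = x" and y: "y = Lv u x" by blast
    have LAx: "Lv A x = 0" using LA xd by simp
    have "Lv l y = Lv (l * u) x" unfolding y by (simp add: Lv_mult[OF ch])
    also have "\<dots> = - Lv t' (Lv A x)" unfolding lu
      by (metis Lv_minus[OF ch] Lv_mult[OF ch] mult.commute)
    finally have ly: "Lv l y = 0" using LAx by simp
    have "Lv A y = Lv u (Lv A x)" unfolding y Auv by (metis Lv_mult[OF ch] mult.commute)
    then have "Lv A y = 0" using LAx by simp
    then have yd: "y ^ (CARD('p) ^ d) = y" using LA by simp
    obtain j where "n = d * j" using dn by blast
    then have "y ^ (CARD('p) ^ n) = y" using fix_mult[OF yd] by simp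
    then show "y \<in> {x. Lv l x = 0} \<inter> {x. x ^ (CARD('p) ^ n) = x}" using ly by simp
  qed
  show ?thesis
    unfolding Let_def d_def[symmetric] t_def[symmetric] w_def[symmetric] u_def[symmetric]
    unfolding kerl sub img using main .
qed

end
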